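(* For all integers $\ell,k\ge0$, in $U(gl(m|n+1))$, $$\sum_{p=1}^{N}(-1)^{(p)}\big[(\mathcal B^\ell)^p_{\ N},(\mathcal B^k)^N_{\ p}\big]=\sum_{i=0}^{\ell-1}\big(\hat I_i\,\tau_{\ell+k-1-i}-\hat I_{\ell+k-1-i}\,\tau_i\big).$$
   Context: Over $\mathbb{C}$, $N=m+n+1$, parity $(p)=0$ for $1\le p\le m$, $(p)=1$ for $m<p\le N$. $gl(m|n+1)$ has homogeneous basis $E_{pq}$ of parity $(p)+(q)$ with graded bracket $[E_{pq},E_{rs}]=\delta_{qr}E_{ps}-(-1)^{((p)+(q))((r)+(s))}\delta_{ps}E_{rq}$. $\mathcal B^p_{\ q}=(-1)^{(p)}E_{pq}$, with powers $(\mathcal B^k)^p_{\ q}=\sum_r\mathcal B^p_{\ r}(\mathcal B^{k-1})^r_{\ q}$, $(\mathcal B^0)^p_{\ q}=\delta_{pq}$; the entry $(\mathcal B^k)^p_{\ q}$ ($k\ge1$) is homogeneous of parity $(p)+(q)$. $\tau_k=(\mathcal B^k)^N_{\ N}$ (so $\tau_0=1$) and $\hat I_k=\sum_{p=1}^N(-1)^{(p)}(\mathcal B^k)^p_{\ p}$ (so $\hat I_0=m-n-1$), the Casimir elements of $gl(m|n+1)$. The bracket on the left is the graded commutator $[a,b]=ab-(-1)^{|a||b|}ba$ for homogeneous $a,b$. *)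

theory Defs
  imports Complex_Main
begin

definition par :: "nat \<Rightarrow> nat \<Rightarrow> nat" where
  "par m p = (if p \<le> m then 0 else 1)"

definition gcomm :: "nat \<Rightarrow> nat \<Rightarrow> 'a::ring_1 \<Rightarrow> 'a \<Rightarrow> 'a" where
  "gcomm i j a b = a * b - (-1) ^ (i * j) * b * a"

definition gl_rel :: "nat \<Rightarrow> nat \<Rightarrow> (nat \<Rightarrow> nat \<Rightarrow> 'a::ring_1) \<Rightarrow> bool" where
  "gl_rel m n E \<longleftrightarrow>
     (\<forall>p\<in>{1..m+n+1}. \<forall>q\<in>{1..m+n+1}. \<forall>r\<in>{1..m+n+1}. \<forall>s\<in>{1..m+n+1}.
        gcomm (par m p + par m q) (par m r + par m s) (E p q) (E r s)
        = (if q = r then E p s else 0)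
          - (-1) ^ ((par m p + par m q) * (par m r + par m s)) * (if p = s then E r q else 0))"

text \<open>Entries of powers of the matrix B, with B p q = (-1)^(p) E p q.\<close>
fun Bpow :: "nat \<Rightarrow> nat \<Rightarrow> (nat \<Rightarrow> nat \<Rightarrow> 'a::ring_1) \<Rightarrow> nat \<Rightarrow> nat \<Rightarrow> nat \<Rightarrow> 'a" where
  "Bpow m n E 0 p q = (if p = q then 1 else 0)"
| "Bpow m n E (Suc k) p q =
     (\<Sum>r = 1..m+n+1. ((-1) ^ par m p * E p r) * Bpow m n E k r q)"

definition tau :: "nat \<Rightarrow> nat \<Rightarrow> (nat \<Rightarrow> nat \<Rightarrow> 'a::ring_1) \<Rightarrow> nat \<Rightarrow> 'a" where
  "tau m n E k = Bpow m n E k (m+n+1) (m+n+1)"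

definition Ihat :: "nat \<Rightarrow> nat \<Rightarrow> (nat \<Rightarrow> nat \<Rightarrow> 'a::ring_1) \<Rightarrow> nat \<Rightarrow> 'a" where
  "Ihat m n E k = (\<Sum>p = 1..m+n+1. (-1) ^ par m p * Bpow m n E k p p)"

end

theory Submission
  imports Defs
begin



lemma par_cases: "par m p = 0 \<or> par m p = 1" by (simp add: par_def)

lemma dec1:
  fixes c1 c2 s E A Y :: "'a::ring_1"
  assumes "c1 \<in> {1,-1}" "c2 \<in> {1,-1}" "s \<in> {1,-1}"
  shows "E*((s*A)*Y) - (c1*c2)*((s*A)*Y)*E = s*((E*A - c1*A*E)*Y) + s*c1*(A*(E*Y - c2*Y*E))"
  using assms by (auto simp: algebra_simps)

lemma sgn_pm: "(-1::'a::ring_1)^k \<in> {1,-1}" by (simp add: minus_one_power_iff)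

lemma relapp:
  assumes rel: "gl_rel m n E" and "p \<in> {1..m+n+1}" "q \<in> {1..m+n+1}" "r \<in> {1..m+n+1}" "s \<in> {1..m+n+1}"
  shows "E p q * E r s - (-1)^((par m p + par m q) * (par m r + par m s)) * E r s * E p q
        = (if q = r then E p s else 0)
          - (-1) ^ ((par m p + par m q) * (par m r + par m s)) * (if p = s then E r q else 0)"
  using assms unfolding gl_rel_def gcomm_def by blast




lemma tensor:
  assumes rel: "gl_rel m n E" and p: "p \<in> {1..m+n+1}" and q: "q \<in> {1..m+n+1}"
  shows "\<forall>r\<in>{1..m+n+1}. \<forall>s\<in>{1..m+n+1}.
     E p q * Bpow m n E k r s - (-1)^((par m p + par m q)*(par m r + par m s)) * Bpow m n E k r s * E p q
   = (if q = r then (-1)^(par m p + par m q) * Bpow m n E k p s else 0)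
     - (-1)^((par m p + par m q)*(par m r + par m s)) * (if p = s then Bpow m n E k r q else 0)"
proof (induction k)
  case 0
  show ?case by (auto simp: par_def minus_one_power_iff)
next
  case (Suc k)
  show ?case
  proof (intro ballI)
    fix r s assume r: "r \<in> {1..m+n+1}" and s: "s \<in> {1..m+n+1}"
    define R where "R = {1..m+n+1}"
    define \<alpha> where "\<alpha> = par m p + par m q"
    define Y where "Y = Bpow m n E k"
    define c1 where "c1 t = (-1::'a)^(\<alpha>*(par m r + par m t))" for t
    define c2 where "c2 t = (-1::'a)^(\<alpha>*(par m t + par m s))" for t
    define c where "c = (-1::'a)^(\<alpha>*(par m r + par m s))"
    define sr where "sr = (-1::'a)^par m r"
    define F1 where "F1 t = (if q = r then (-1)^\<alpha> * (((-1)^par m p * E p t) * Y t s) else 0)" for t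
    define F2 where "F2 t = (if t = p then - (sr * c1 p * E r q * Y p s) else 0)" for t
    define F3 where "F3 t = (if t = q then sr * c1 q * (-1)^\<alpha> * E r q * Y p s else 0)" for t
    define F4 where "F4 t = (if p = s then - (c * ((sr * E r t) * Y t q)) else 0)" for t
    have cc: "c1 t * c2 t = c" for t
      unfolding c1_def c2_def c_def power_add[symmetric]
      using par_cases[of m p] par_cases[of m q] par_cases[of m r] par_cases[of m s] par_cases[of m t]
      by (auto simp: \<alpha>_def minus_one_power_iff)
    have trm: "E p q * ((sr*E r t)*Y t s) - c*((sr*E r t)*Y t s)*E p q = F1 t + F2 t + F3 t + F4 t"
      if t: "t \<in> R" for t
    proof -
      have "E p q * ((sr*E r t)*Y t s) - c*((sr*E r t)*Y t s)*E p q
          = sr*((E p q * E r t - c1 t * E r t * E p q)*Y t s) + sr*c1 t*(E r t*(E p q * Y t s - c2 t * Y t s * E p q))"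
        unfolding cc[of t, symmetric] by (rule dec1) (simp_all only: c1_def c2_def sr_def sgn_pm)
      also have "\<dots> = sr*(((if q = r then E p t else 0) - c1 t * (if p = t then E r q else 0))*Y t s)
           + sr*c1 t*(E r t*((if q = t then (-1)^\<alpha> * Y p s else 0) - c2 t * (if p = s then Y t q else 0)))"
        using relapp[OF rel p q r t[unfolded R_def]] Suc.IH t s
        unfolding c1_def c2_def \<alpha>_def Y_def R_def by auto
      also have "\<dots> = F1 t + F2 t + F3 t + F4 t"
        unfolding F1_def F2_def F3_def F4_def cc[of t, symmetric] sr_def c1_def c2_def
        using par_cases[of m p] par_cases[of m q] par_cases[of m r] par_cases[of m s] par_cases[of m t]
        by (auto simp: \<alpha>_def minus_one_power_iff algebra_simps)
      finally show ?thesis .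
    qed
    have fin: "finite R" by (simp add: R_def)
    have pR: "p \<in> R" and qR: "q \<in> R" using p q by (simp_all add: R_def)
    have Bp: "Bpow m n E (Suc k) a b = (\<Sum>t\<in>R. ((-1)^par m a * E a t) * Y t b)" for a b
      by (simp only: Bpow.simps R_def Y_def)
    have B: "Bpow m n E (Suc k) r s = (\<Sum>t\<in>R. (sr*E r t)*Y t s)"
      by (simp only: Bp sr_def)
    have S1: "sum F1 R = (if q = r then (-1)^\<alpha> * Bpow m n E (Suc k) p s else 0)"
      unfolding F1_def Bp by (simp add: sum_distrib_left del: Bpow.simps)
    have S4: "sum F4 R = (if p = s then - (c * Bpow m n E (Suc k) r q) else 0)"
      unfolding F4_def Bp sr_def by (simp add: sum_distrib_left sum_negf mult.assoc del: Bpow.simps)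
    have S2: "sum F2 R = - (sr * c1 p * E r q * Y p s)"
      using pR fin by (simp add: F2_def)
    have S3: "sum F3 R = sr * c1 q * (-1)^\<alpha> * E r q * Y p s"
      using qR fin by (simp add: F3_def)
    have c1e: "c1 q * (-1)^\<alpha> = c1 p"
      unfolding c1_def power_add[symmetric]
      using par_cases[of m p] par_cases[of m q] par_cases[of m r]
      by (auto simp: \<alpha>_def minus_one_power_iff)
    have S23: "sum F2 R + sum F3 R = 0"
      unfolding S2 S3 by (simp add: mult.assoc c1e)
    have "E p q * Bpow m n E (Suc k) r s - c * Bpow m n E (Suc k) r s * E p q
        = (\<Sum>t\<in>R. E p q * ((sr*E r t)*Y t s) - c*((sr*E r t)*Y t s)*E p q)"
      unfolding B by (simp add: sum_distrib_left sum_distrib_right sum_subtractf)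
    also have "\<dots> = (\<Sum>t\<in>R. F1 t + F2 t + F3 t + F4 t)"
      by (rule sum.cong) (simp_all add: trm)
    also have "\<dots> = sum F1 R + (sum F2 R + sum F3 R) + sum F4 R"
      by (simp add: sum.distrib add.assoc)
    also have "\<dots> = (if q = r then (-1)^\<alpha> * Bpow m n E (Suc k) p s else 0)
                 - c * (if p = s then Bpow m n E (Suc k) r q else 0)"
      unfolding S1 S23 S4 by simp
    finally show "E p q * Bpow m n E (Suc k) r s - (-1)^((par m p + par m q)*(par m r + par m s)) * Bpow m n E (Suc k) r s * E p q
   = (if q = r then (-1)^(par m p + par m q) * Bpow m n E (Suc k) p s else 0)
     - (-1)^((par m p + par m q)*(par m r + par m s)) * (if p = s then Bpow m n E (Suc k) r q else 0)"
      unfolding c_def \<alpha>_def .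
  qed
qed




declare Bpow.simps(2)[simp del] sum.cl_ivl_Suc[simp del]

lemma Bpow_Suc_R: "Bpow m n E (Suc k) a b = (\<Sum>t\<in>{1..m+n+1}. ((-1)^par m a * E a t) * Bpow m n E k t b)"
  by (simp only: Bpow.simps)

lemma Bpow_add:
  assumes "a \<in> {1..m+n+1}"
  shows "(\<Sum>r\<in>{1..m+n+1}. Bpow m n E k a r * Bpow m n E l r b) = Bpow m n E (k+l) a b"
  using assms
proof (induction k arbitrary: a)
  case 0
  have "(\<Sum>r\<in>{1..m+n+1}. Bpow m n E 0 a r * Bpow m n E l r b) = (\<Sum>r\<in>{1..m+n+1}. if a = r then Bpow m n E l r b else 0)"
    by (rule sum.cong) auto
  also have "\<dots> = Bpow m n E l a b" using 0 by (subst sum.delta') auto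
  finally show ?case by simp
next
  case (Suc k)
  have "(\<Sum>r\<in>{1..m+n+1}. Bpow m n E (Suc k) a r * Bpow m n E l r b)
      = (\<Sum>r\<in>{1..m+n+1}. \<Sum>t\<in>{1..m+n+1}. ((-1)^par m a * E a t) * (Bpow m n E k t r * Bpow m n E l r b))"
    by (simp add: Bpow_Suc_R sum_distrib_right mult.assoc)
  also have "\<dots> = (\<Sum>t\<in>{1..m+n+1}. ((-1)^par m a * E a t) * (\<Sum>r\<in>{1..m+n+1}. Bpow m n E k t r * Bpow m n E l r b))"
    by (simp add: sum_distrib_left) (rule sum.swap)
  also have "\<dots> = (\<Sum>t\<in>{1..m+n+1}. ((-1)^par m a * E a t) * Bpow m n E (k+l) t b)"
    using Suc.IH by (intro sum.cong) auto
  also have "\<dots> = Bpow m n E (Suc k + l) a b" by (simp add: Bpow_Suc_R)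
  finally show ?case .
qed

lemma dec2:
  fixes c1 c2 b X Y :: "'a::ring_1"
  assumes "c1 \<in> {1,-1}" "c2 \<in> {1,-1}"
  shows "b*Y*X - (c1*c2)*X*(b*Y) = b*(Y*X - c1*X*Y) + c1*(b*X - c2*X*b)*Y"
  using assms by (auto simp: algebra_simps)

lemma parN: "par m (m+n+1) = 1" by (simp add: par_def)




lemma Hlem:
  assumes rel: "gl_rel m n E"
  shows "\<forall>a\<in>{1..m+n+1}. \<forall>d\<in>{1..m+n+1}.
     Bpow m n E l a (m+n+1) * Bpow m n E k (m+n+1) d
     - (-1)^((par m a + par m (m+n+1))*(par m (m+n+1) + par m d)) * Bpow m n E k (m+n+1) d * Bpow m n E l a (m+n+1)
   = - (\<Sum>i<l. Bpow m n E (k+i) a d * tau m n E (l-1-i) - Bpow m n E i a d * tau m n E (k+l-1-i))"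
proof (induction l)
  case 0
  show ?case by (auto simp: par_def)
next
  case (Suc l)
  show ?case
  proof (intro ballI)
    fix a d assume a: "a \<in> {1..m+n+1}" and d: "d \<in> {1..m+n+1}"
    define N where "N = m+n+1"
    define R where "R = {1..m+n+1}"
    have NR: "N \<in> R" by (simp add: N_def R_def)
    have fin: "finite R" by (simp add: R_def)
    have pN: "par m N = 1" by (simp add: N_def par_def)
    define X where "X = Bpow m n E k"
    define Y where "Y = Bpow m n E l"
    define sa where "sa = (-1::'a)^par m a"
    define c1 where "c1 r = (-1::'a)^((par m r + par m N)*(par m N + par m d))" for r
    define c2 where "c2 r = (-1::'a)^((par m a + par m r)*(par m N + par m d))" for r
    define c where "c = (-1::'a)^((par m a + par m N)*(par m N + par m d))"
    define H where "H r = Y r N * X N d - c1 r * X N d * Y r N" for r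
    define G1 where "G1 r = (if r = N then - (X a d * tau m n E l) else 0)" for r
    define G2 where "G2 r = (if a = d then X N r * Y r N else 0)" for r
    have cc: "c1 r * c2 r = c" for r
      unfolding c1_def c2_def c_def power_add[symmetric]
      using par_cases[of m a] par_cases[of m d] par_cases[of m r] pN
      by (auto simp: minus_one_power_iff)
    have trm: "((sa*E a r)*Y r N)*X N d - c*X N d*((sa*E a r)*Y r N) = (sa*E a r)*H r + G1 r + G2 r"
      if r: "r \<in> R" for r
    proof -
      have "((sa*E a r)*Y r N)*X N d - c*X N d*((sa*E a r)*Y r N)
          = (sa*E a r)*H r + c1 r*((sa*E a r)*X N d - c2 r*X N d*(sa*E a r))*Y r N"
        unfolding cc[of r, symmetric] H_def by (rule dec2) (simp_all only: c1_def c2_def sgn_pm)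
      also have "(sa*E a r)*X N d - c2 r*X N d*(sa*E a r) = sa*(E a r*X N d - c2 r*X N d*E a r)"
        using sgn_pm[of "par m a", where 'a='a] unfolding sa_def by (auto simp: algebra_simps)
      also have "E a r*X N d - c2 r*X N d*E a r
          = (if r = N then (-1)^(par m a + par m r) * X a d else 0) - c2 r * (if a = d then X N r else 0)"
        using tensor[OF rel a r[unfolded R_def], of k] NR d unfolding c2_def X_def R_def N_def by auto
      also have "(sa*E a r)*H r + c1 r*(sa*((if r = N then (-1)^(par m a + par m r) * X a d else 0) - c2 r * (if a = d then X N r else 0)))*Y r N
          = (sa*E a r)*H r + G1 r + G2 r"
        unfolding G1_def G2_def c1_def c2_def sa_def tau_def Y_def
        using par_cases[of m a] par_cases[of m d] par_cases[of m r] pN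
        by (auto simp: minus_one_power_iff algebra_simps N_def)
      finally show ?thesis .
    qed
    show "Bpow m n E (Suc l) a (m+n+1) * Bpow m n E k (m+n+1) d
     - (-1)^((par m a + par m (m+n+1))*(par m (m+n+1) + par m d)) * Bpow m n E k (m+n+1) d * Bpow m n E (Suc l) a (m+n+1)
   = - (\<Sum>i<Suc l. Bpow m n E (k+i) a d * tau m n E (Suc l-1-i) - Bpow m n E i a d * tau m n E (k+Suc l-1-i))"
      (is "?L = ?R")
    proof -
      have contr: "(\<Sum>r\<in>R. (sa*E a r) * (Bpow m n E j r d * z)) = Bpow m n E (Suc j) a d * z" for j z
        unfolding Bpow_Suc_R R_def sa_def by (simp add: sum_distrib_right mult.assoc)
      have Hr: "H r = - (\<Sum>i<l. Bpow m n E (k+i) r d * tau m n E (l-1-i) - Bpow m n E i r d * tau m n E (k+l-1-i))"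
        if "r \<in> R" for r
        using Suc.IH that d unfolding H_def R_def N_def Y_def X_def c1_def by blast
      have "?L = (\<Sum>r\<in>R. ((sa*E a r)*Y r N)*X N d - c*X N d*((sa*E a r)*Y r N))"
        unfolding Bpow_Suc_R R_def[symmetric] N_def[symmetric] c_def[symmetric] Y_def[symmetric] X_def[symmetric] sa_def[symmetric]
        by (simp add: sum_distrib_left sum_distrib_right sum_subtractf mult.assoc R_def N_def)
      also have "\<dots> = (\<Sum>r\<in>R. (sa*E a r)*H r + G1 r + G2 r)"
        by (rule sum.cong) (simp_all add: trm)
      also have "\<dots> = (\<Sum>r\<in>R. (sa*E a r)*H r) + sum G1 R + sum G2 R"
        by (simp add: sum.distrib)
      also have "(\<Sum>r\<in>R. (sa*E a r)*H r)
          = (\<Sum>r\<in>R. \<Sum>i<l. - ((sa*E a r)*(Bpow m n E (k+i) r d * tau m n E (l-1-i)) - (sa*E a r)*(Bpow m n E i r d * tau m n E (k+l-1-i))))"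
        by (rule sum.cong) (simp_all only: Hr mult_minus_right sum_distrib_left right_diff_distrib sum_negf[symmetric])
      also have "\<dots> = (\<Sum>i<l. \<Sum>r\<in>R. - ((sa*E a r)*(Bpow m n E (k+i) r d * tau m n E (l-1-i)) - (sa*E a r)*(Bpow m n E i r d * tau m n E (k+l-1-i))))"
        by (rule sum.swap)
      also have "\<dots> = (\<Sum>i<l. - (Bpow m n E (Suc (k+i)) a d * tau m n E (l-1-i) - Bpow m n E (Suc i) a d * tau m n E (k+l-1-i)))"
        by (simp add: sum_negf sum_subtractf contr)
      also have "sum G1 R = - (X a d * tau m n E l)"
        using NR fin unfolding G1_def by simp
      also have "sum G2 R = (if a = d then tau m n E (k+l) else 0)"
        using Bpow_add[where a=N and m=m and n=n and k=k and E=E and l=l and b=N] NR unfolding G2_def X_def Y_def tau_def R_def N_def by simp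
      finally have L: "?L = (\<Sum>i<l. - (Bpow m n E (Suc (k+i)) a d * tau m n E (l-1-i) - Bpow m n E (Suc i) a d * tau m n E (k+l-1-i)))
           + - (X a d * tau m n E l) + (if a = d then tau m n E (k+l) else 0)" .
      define S where "S = (\<Sum>i<l. Bpow m n E (Suc (k+i)) a d * tau m n E (l-1-i) - Bpow m n E (Suc i) a d * tau m n E (k+l-1-i))"
      have L2: "?L = - S + - (X a d * tau m n E l) + (if a = d then tau m n E (k+l) else 0)"
        unfolding L S_def sum_negf ..
      have R2: "?R = - ((X a d * tau m n E l - (if a = d then 1 else 0) * tau m n E (k+l)) + S)"
        unfolding sum.lessThan_Suc_shift X_def S_def by simp
      show ?thesis unfolding L2 R2 by (simp add: algebra_simps)
    qed
  qed
qed




theorem proposition12: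
  fixes m n l k :: nat
    and E :: "nat \<Rightarrow> nat \<Rightarrow> 'a::ring_1"
    and scal :: "complex \<Rightarrow> 'a"
  assumes scal_one: "scal 1 = 1"
    and scal_add: "\<And>a b. scal (a + b) = scal a + scal b"
    and scal_mult: "\<And>a b. scal (a * b) = scal a * scal b"
    and scal_central: "\<And>a x. scal a * x = x * scal a"
    and rel: "gl_rel m n E"
  shows "(\<Sum>p = 1..m+n+1. (-1) ^ par m p *
            gcomm (par m p + par m (m+n+1)) (par m (m+n+1) + par m p)
                  (Bpow m n E l p (m+n+1)) (Bpow m n E k (m+n+1) p))
       = (\<Sum>i<l. Ihat m n E i * tau m n E (l+k-1-i) - Ihat m n E (l+k-1-i) * tau m n E i)"
proof -
  define R where "R = {1..m+n+1}"
  define T where "T = tau m n E"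
  define I where "I = Ihat m n E"
  have "(\<Sum>p = 1..m+n+1. (-1) ^ par m p *
            gcomm (par m p + par m (m+n+1)) (par m (m+n+1) + par m p)
                  (Bpow m n E l p (m+n+1)) (Bpow m n E k (m+n+1) p))
      = (\<Sum>p\<in>R. \<Sum>i<l. - ((-1) ^ par m p * Bpow m n E (k+i) p p * T (l-1-i) - (-1) ^ par m p * Bpow m n E i p p * T (k+l-1-i)))"
    unfolding R_def
  proof (rule sum.cong)
    fix p assume p: "p \<in> {1..m+n+1}"
    show "(-1) ^ par m p * gcomm (par m p + par m (m+n+1)) (par m (m+n+1) + par m p)
                  (Bpow m n E l p (m+n+1)) (Bpow m n E k (m+n+1) p)
        = (\<Sum>i<l. - ((-1) ^ par m p * Bpow m n E (k+i) p p * T (l-1-i) - (-1) ^ par m p * Bpow m n E i p p * T (k+l-1-i)))"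
    proof -
      have h: "Bpow m n E l p (m+n+1) * Bpow m n E k (m+n+1) p
     - (-1)^((par m p + par m (m+n+1))*(par m (m+n+1) + par m p)) * Bpow m n E k (m+n+1) p * Bpow m n E l p (m+n+1)
   = - (\<Sum>i<l. Bpow m n E (k+i) p p * tau m n E (l-1-i) - Bpow m n E i p p * tau m n E (k+l-1-i))"
        using Hlem[OF rel, of l k] p by blast
      show ?thesis unfolding gcomm_def T_def h
        by (simp only: mult_minus_right sum_distrib_left right_diff_distrib sum_negf[symmetric] mult.assoc)
    qed
  qed simp
  also have "\<dots> = (\<Sum>i<l. \<Sum>p\<in>R. - ((-1) ^ par m p * Bpow m n E (k+i) p p * T (l-1-i) - (-1) ^ par m p * Bpow m n E i p p * T (k+l-1-i)))"
    by (rule sum.swap)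
  also have "\<dots> = (\<Sum>i<l. I i * T (k+l-1-i) - I (k+i) * T (l-1-i))"
    unfolding I_def Ihat_def R_def
    by (simp add: sum_negf sum_subtractf sum_distrib_right)
  also have "\<dots> = (\<Sum>i<l. I i * T (k+l-1-i)) - (\<Sum>i<l. I (k+(l - Suc i)) * T (l-1-(l - Suc i)))"
  proof -
    have re: "(\<Sum>i<l. I (k+(l - Suc i)) * T (l-1-(l - Suc i))) = (\<Sum>i<l. I (k+i) * T (l-1-i))"
      by (rule sum.nat_diff_reindex)
    show ?thesis by (simp only: sum_subtractf re)
  qed
  also have "(\<Sum>i<l. I (k+(l - Suc i)) * T (l-1-(l - Suc i))) = (\<Sum>i<l. I (l+k-1-i) * T i)"
    by (rule sum.cong) (auto intro!: arg_cong2[where f="\<lambda>a b. I a * T b"])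
  finally show ?thesis unfolding I_def T_def by (simp add: sum_subtractf add.commute)
qed


end
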